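(* Let $n\ge 1$, $d_1,\dots,d_n\ge 1$, $L_i\in\mathbb{C}^{d_i\times d_i}$ ($i=1,\dots,n$) and $C_{i,i-1}\in\mathbb{C}^{d_i\times d_{i-1}}$ ($i=2,\dots,n$). Assume: (i) each $L_i$ is invertible and diagonalizable, $L_iV_i=V_i\Lambda_i$ with $V_i$ invertible and $\Lambda_i=\mathrm{diag}(\lambda_{i,1},\dots,\lambda_{i,d_i})$; (ii) $\sigma(L_i)\cap\sigma(L_j)=\emptyset$ for all $i\neq j$; (iii) $\|L_1\|<\|L_2\|<\cdots<\|L_n\|\le 1$. Fix $i\in\{1,\dots,n\}$ and $s_i\in\{1,\dots,d_i\}$. Then $\Psi_{i,s_i}\circ\mathsf{pert}$ is an eigenfunction of the Koopman operator $\mathcal U_{\mathsf{Lin}}$ (defined by $\mathcal U_{\mathsf{Lin}}f=f\circ\mathsf{Lin}$) at eigenvalue $\lambda_{i,s_i}$, i.e. $\Psi_{i,s_i}(\mathsf{pert}(\mathsf{Lin}(x)))=\lambda_{i,s_i}\Psi_{i,s_i}(\mathsf{pert}(x))$ for all $x\in\mathbb{C}^{d_1}\times\cdots\times\mathbb{C}^{d_n}$.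
   Context: Each $\mathbb{C}^{d_i}$ carries a fixed norm, matrices carry the induced operator norm. $\mathsf{Lin}(x_1,\dots,x_n)=(L_1x_1,\;L_2x_2+C_{2,1}x_1,\;\dots,\;L_nx_n+C_{n,n-1}x_{n-1})$. The principal eigenfunction $\psi_{i,s}(x_i)=\hat e_s^{*}V_i^{-1}x_i$ ($\hat e_s$ the $s$-th standard basis vector of $\mathbb{C}^{d_i}$), and $\Psi_{i,s}(x_1,\dots,x_n)=\psi_{i,s}(x_i)$. Matrices $D_{i,j}$ ($1\le j\le i\le n$) are defined recursively in $i$: $D_{i,i}=I_{d_i}$; for $i\ge 2$, $1\le j\le i-1$, $[\tilde C_{i,j}]_{\ell,m}=[V_i^{-1}C_{i,i-1}D_{i-1,j}V_j]_{\ell,m}(1-\lambda_{j,m}/\lambda_{i,\ell})^{-1}$ and $D_{i,j}=L_i^{-1}V_i\tilde C_{i,j}V_j^{-1}$. Define $\mathsf{pert}_1(x_1)=x_1$, $\mathsf{pert}_i(x_1,\dots,x_i)=x_i+\sum_{j=1}^{i-1}(-1)^{i-1-j}D_{i,j}\mathsf{pert}_j(x_1,\dots,x_j)$ for $i\ge2$, and $\mathsf{pert}(x)=(\mathsf{pert}_1(x_1),\dots,\mathsf{pert}_n(x_1,\dots,x_n))$. *)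

theory Defs
  imports "Jordan_Normal_Form.Spectral_Radius" "Jordan_Normal_Form.Gauss_Jordan_Elimination"
begin

text \<open>Matrix inverse (library Gauss-Jordan inverse; meaningful for invertible square matrices).\<close>
definition inv_m :: "complex mat \<Rightarrow> complex mat" where
  "inv_m A = the (mat_inverse A)"

definition is_vec_norm :: "nat \<Rightarrow> (complex vec \<Rightarrow> real) \<Rightarrow> bool" where
  "is_vec_norm d N \<longleftrightarrow>
     (\<forall>x \<in> carrier_vec d. N x \<ge> 0 \<and> (N x = 0 \<longleftrightarrow> x = 0\<^sub>v d)) \<and>
     (\<forall>x \<in> carrier_vec d. \<forall>c. N (c \<cdot>\<^sub>v x) = cmod c * N x) \<and>
     (\<forall>x \<in> carrier_vec d. \<forall>y \<in> carrier_vec d. N (x + y) \<le> N x + N y)"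

definition op_norm :: "nat \<Rightarrow> (complex vec \<Rightarrow> real) \<Rightarrow> complex mat \<Rightarrow> real" where
  "op_norm d N A = Sup {N (A *\<^sub>v x) | x. x \<in> carrier_vec d \<and> N x \<le> 1}"

text \<open>The linear map Lin (0-based block indices).\<close>
definition Lin :: "(nat \<Rightarrow> complex mat) \<Rightarrow> (nat \<Rightarrow> complex mat) \<Rightarrow> (nat \<Rightarrow> complex vec) \<Rightarrow> (nat \<Rightarrow> complex vec)" where
  "Lin L C x = (\<lambda>k. if k = 0 then L 0 *\<^sub>v x 0 else L k *\<^sub>v x k + C k *\<^sub>v x (k - 1))"

text \<open>The matrices D (0-based): D i j for j \<le> i.  C k is the coupling block C_{k,k-1}.\<close>
fun Dm :: "(nat \<Rightarrow> nat) \<Rightarrow> (nat \<Rightarrow> complex mat) \<Rightarrow> (nat \<Rightarrow> complex mat) \<Rightarrow> (nat \<Rightarrow> nat \<Rightarrow> complex)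
            \<Rightarrow> (nat \<Rightarrow> complex mat) \<Rightarrow> nat \<Rightarrow> nat \<Rightarrow> complex mat" where
  "Dm d L V lam C 0 j = 1\<^sub>m (d 0)"
| "Dm d L V lam C (Suc i) j =
     (if j = Suc i then 1\<^sub>m (d (Suc i))
      else inv_m (L (Suc i)) * V (Suc i) *
           Matrix.mat (d (Suc i)) (d j)
             (\<lambda>(l, m). (inv_m (V (Suc i)) * C (Suc i) * Dm d L V lam C i j * V j) $$ (l, m)
                        * inverse (1 - lam j m / lam (Suc i) l))
           * inv_m (V j))"

fun pert :: "(nat \<Rightarrow> nat) \<Rightarrow> (nat \<Rightarrow> complex mat) \<Rightarrow> (nat \<Rightarrow> complex mat) \<Rightarrow> (nat \<Rightarrow> nat \<Rightarrow> complex)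
            \<Rightarrow> (nat \<Rightarrow> complex mat) \<Rightarrow> nat \<Rightarrow> (nat \<Rightarrow> complex vec) \<Rightarrow> complex vec" where
  "pert d L V lam C 0 x = x 0"
| "pert d L V lam C (Suc i) x =
     x (Suc i) +
     foldr (+) (map (\<lambda>j. ((-1) ^ (i - j)) \<cdot>\<^sub>v (Dm d L V lam C (Suc i) j *\<^sub>v pert d L V lam C j x))
                 [0..<Suc i]) (0\<^sub>v (d (Suc i)))"

definition Psi :: "(nat \<Rightarrow> complex mat) \<Rightarrow> nat \<Rightarrow> nat \<Rightarrow> (nat \<Rightarrow> complex vec) \<Rightarrow> complex" where
  "Psi V i s x = (inv_m (V i) *\<^sub>v x i) $ s"

end

theory Submission
  imports Defs
begin


lemma inv_m_props:
  fixes A :: "complex mat"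
  assumes A: "A \<in> carrier_mat n n" and inv: "invertible_mat A"
  shows "inv_m A \<in> carrier_mat n n" "A * inv_m A = 1\<^sub>m n" "inv_m A * A = 1\<^sub>m n"
proof -
  from inv obtain B where AB: "A * B = 1\<^sub>m (dim_row A)" and BA: "B * A = 1\<^sub>m (dim_row B)"
    unfolding invertible_mat_def inverts_mat_def by blast
  have dA: "dim_row A = n" "dim_col A = n" using A by auto
  have "dim_col (A * B) = n" using AB dA by simp
  then have c: "dim_col B = n" by simp
  have "dim_col (B * A) = dim_row B" using BA by simp
  then have r: "dim_row B = n" using dA by simp
  have B: "B \<in> carrier_mat n n" using c r by auto
  have "A \<in> Units (ring_mat TYPE(complex) n undefined)"
    unfolding Units_def ring_mat_def using A B AB BA dA r by (simp add: Units_def ring_mat_def) (metis c carrier_matI)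
  then have "mat_inverse A \<noteq> None" using mat_inverse(1)[OF A, of undefined] by blast
  then obtain C where C: "mat_inverse A = Some C" by auto
  from mat_inverse(2)[OF A C] C show "inv_m A \<in> carrier_mat n n" "A * inv_m A = 1\<^sub>m n" "inv_m A * A = 1\<^sub>m n"
    unfolding inv_m_def by auto
qed

lemma assoc_dim: "dim_col A = dim_row B \<Longrightarrow> dim_col B = dim_row C \<Longrightarrow> (A * B) * C = A * (B * (C::complex mat))"
  by (rule assoc_mult_mat[of A "dim_row A" "dim_col A" B "dim_col B" C "dim_col C"]) auto

lemma sm_zero: assumes "v \<in> carrier_vec r" shows "(0::complex) \<cdot>\<^sub>v v = 0\<^sub>v r"
proof -
  have "dim_vec v = r" using assms by auto
  then show ?thesis by (intro eq_vecI) auto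
qed

lemma mv_zero: "A \<in> carrier_mat r c \<Longrightarrow> A *\<^sub>v 0\<^sub>v c = (0\<^sub>v r :: complex vec)"
  by (intro eq_vecI) (auto simp: scalar_prod_def)

lemma foldr_carrier: "(\<forall>j\<in>set js. f j \<in> carrier_vec r) \<Longrightarrow> foldr (+) (map f js) (0\<^sub>v r) \<in> carrier_vec (r::nat)"
  by (induction js) auto

lemma foldr_index: "(\<forall>j\<in>set js. f j \<in> carrier_vec r) \<Longrightarrow> t < r \<Longrightarrow>
   foldr (+) (map f js) (0\<^sub>v r) $ t = (\<Sum>j\<leftarrow>js. (f j $ t :: complex))"
proof (induction js)
  case Nil then show ?case by simp
next
  case (Cons a js)
  have "foldr (+) (map f js) (0\<^sub>v r) \<in> carrier_vec r" using Cons.prems by (intro foldr_carrier) auto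
  then show ?case using Cons by auto
qed

lemma foldr_mult: "A \<in> carrier_mat r c \<Longrightarrow> (\<forall>j\<in>set js. f j \<in> carrier_vec c) \<Longrightarrow>
   A *\<^sub>v foldr (+) (map f js) (0\<^sub>v c) = foldr (+) (map (\<lambda>j. A *\<^sub>v f j) js) (0\<^sub>v r :: complex vec)"
proof (induction js)
  case Nil then show ?case using mv_zero by simp
next
  case (Cons a js)
  have "foldr (+) (map f js) (0\<^sub>v c) \<in> carrier_vec c" using Cons.prems by (intro foldr_carrier) auto
  then show ?case using Cons by (auto simp: mult_add_distrib_mat_vec)
qed

lemma foldr_mult_index:
  assumes A: "A \<in> carrier_mat r c" and w: "\<forall>j<m. w j \<in> carrier_vec c" and t: "t < r"
  shows "(A *\<^sub>v foldr (+) (map (\<lambda>j. sc j \<cdot>\<^sub>v w j) [0..<m]) (0\<^sub>v c)) $ t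
       = (\<Sum>j\<in>{0..<m}. sc j * (A *\<^sub>v w j) $ t :: complex)"
proof -
  have "A *\<^sub>v foldr (+) (map (\<lambda>j. sc j \<cdot>\<^sub>v w j) [0..<m]) (0\<^sub>v c)
     = foldr (+) (map (\<lambda>j. A *\<^sub>v (sc j \<cdot>\<^sub>v w j)) [0..<m]) (0\<^sub>v r)"
    using w by (intro foldr_mult[OF A]) auto
  also have "\<dots> $ t = (\<Sum>j\<leftarrow>[0..<m]. (A *\<^sub>v (sc j \<cdot>\<^sub>v w j)) $ t)"
    using A w t by (intro foldr_index) auto
  also have "\<dots> = (\<Sum>j\<in>{0..<m}. (A *\<^sub>v (sc j \<cdot>\<^sub>v w j)) $ t)"
    by (simp add: interv_sum_list_conv_sum_set_nat)
  also have "\<dots> = (\<Sum>j\<in>{0..<m}. sc j * (A *\<^sub>v w j) $ t)"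
  proof (intro sum.cong refl)
    fix j assume "j \<in> {0..<m}"
    then have wj: "w j \<in> carrier_vec c" using w by auto
    have "A *\<^sub>v (sc j \<cdot>\<^sub>v w j) = sc j \<cdot>\<^sub>v (A *\<^sub>v w j)" by (rule mult_mat_vec[OF A wj])
    then show "(A *\<^sub>v (sc j \<cdot>\<^sub>v w j)) $ t = sc j * (A *\<^sub>v w j) $ t" using A t by simp
  qed
  finally show ?thesis .
qed

declare Dm.simps(2)[simp del]

locale kset =
  fixes n :: nat and d :: "nat \<Rightarrow> nat"
    and L V C :: "nat \<Rightarrow> complex mat" and lam :: "nat \<Rightarrow> nat \<Rightarrow> complex"
  assumes L_dim: "\<forall>k<n. L k \<in> carrier_mat (d k) (d k)"
    and C_dim: "\<forall>k<n. k \<ge> 1 \<longrightarrow> C k \<in> carrier_mat (d k) (d (k - 1))"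
    and V_dim: "\<forall>k<n. V k \<in> carrier_mat (d k) (d k)"
    and L_inv: "\<forall>k<n. invertible_mat (L k)"
    and V_inv: "\<forall>k<n. invertible_mat (V k)"
    and eig: "\<forall>k<n. L k * V k = V k * mat_diag (d k) (lam k)"
    and disj: "\<forall>k<n. \<forall>l<n. k \<noteq> l \<longrightarrow> spectrum (L k) \<inter> spectrum (L l) = {}"
begin

lemma Lc: "k < n \<Longrightarrow> L k \<in> carrier_mat (d k) (d k)" using L_dim by auto
lemma Vc: "k < n \<Longrightarrow> V k \<in> carrier_mat (d k) (d k)" using V_dim by auto
lemma Cc: "k < n \<Longrightarrow> C (Suc k') \<in> carrier_mat (d (Suc k')) (d k')" if "k = Suc k'" for k k'
  using C_dim that by auto
lemma Lic: "k < n \<Longrightarrow> inv_m (L k) \<in> carrier_mat (d k) (d k)"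
  using inv_m_props(1) Lc L_inv by auto
lemma Vic: "k < n \<Longrightarrow> inv_m (V k) \<in> carrier_mat (d k) (d k)"
  using inv_m_props(1) Vc V_inv by auto
lemma L_Li: "k < n \<Longrightarrow> L k * inv_m (L k) = 1\<^sub>m (d k)"
  using inv_m_props(2) Lc L_inv by auto
lemma Li_L: "k < n \<Longrightarrow> inv_m (L k) * L k = 1\<^sub>m (d k)"
  using inv_m_props(3) Lc L_inv by auto
lemma V_Vi: "k < n \<Longrightarrow> V k * inv_m (V k) = 1\<^sub>m (d k)"
  using inv_m_props(2) Vc V_inv by auto
lemma Vi_V: "k < n \<Longrightarrow> inv_m (V k) * V k = 1\<^sub>m (d k)"
  using inv_m_props(3) Vc V_inv by auto

lemma eigvec:
  assumes k: "k < n" and m: "m < d k"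
  shows "L k *\<^sub>v (V k *\<^sub>v unit_vec (d k) m) = lam k m \<cdot>\<^sub>v (V k *\<^sub>v unit_vec (d k) m)"
    "V k *\<^sub>v unit_vec (d k) m \<noteq> 0\<^sub>v (d k)"
proof -
  have "L k *\<^sub>v (V k *\<^sub>v unit_vec (d k) m) = (L k * V k) *\<^sub>v unit_vec (d k) m"
    using Lc[OF k] Vc[OF k] by simp
  also have "\<dots> = (V k * mat_diag (d k) (lam k)) *\<^sub>v unit_vec (d k) m"
    using eig k by simp
  also have "\<dots> = V k *\<^sub>v (mat_diag (d k) (lam k) *\<^sub>v unit_vec (d k) m)"
    by (rule assoc_mult_mat_vec[OF Vc[OF k] mat_diag_dim unit_vec_carrier])
  also have "mat_diag (d k) (lam k) *\<^sub>v unit_vec (d k) m = lam k m \<cdot>\<^sub>v unit_vec (d k) m"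
    using m by (intro eq_vecI) (auto simp: mat_diag_def unit_vec_def scalar_prod_def sum.remove[of _ m])
  also have "V k *\<^sub>v (lam k m \<cdot>\<^sub>v unit_vec (d k) m) = lam k m \<cdot>\<^sub>v (V k *\<^sub>v unit_vec (d k) m)"
    using Vc[OF k] by (intro mult_mat_vec) auto
  finally show "L k *\<^sub>v (V k *\<^sub>v unit_vec (d k) m) = lam k m \<cdot>\<^sub>v (V k *\<^sub>v unit_vec (d k) m)" .
  show "V k *\<^sub>v unit_vec (d k) m \<noteq> 0\<^sub>v (d k)"
  proof
    assume z: "V k *\<^sub>v unit_vec (d k) m = 0\<^sub>v (d k)"
    have "unit_vec (d k) m = (inv_m (V k) * V k) *\<^sub>v unit_vec (d k) m"
      using Vi_V[OF k] by simp
    also have "\<dots> = inv_m (V k) *\<^sub>v (V k *\<^sub>v unit_vec (d k) m)"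
      using Vic[OF k] Vc[OF k] by simp
    also have "\<dots> = 0\<^sub>v (d k)" unfolding z by (rule mv_zero[OF Vic[OF k]])
    finally have "(unit_vec (d k) m :: complex vec) = 0\<^sub>v (d k)" .
    then have "(unit_vec (d k) m :: complex vec) $ m = 0\<^sub>v (d k) $ m" by simp
    then show False using m by simp
  qed
qed

lemma lam_eigenvalue: "k < n \<Longrightarrow> m < d k \<Longrightarrow> lam k m \<in> spectrum (L k)"
proof -
  assume k: "k < n" and m: "m < d k"
  have dr: "dim_row (L k) = d k" using Lc[OF k] by simp
  have vc: "V k *\<^sub>v unit_vec (d k) m \<in> carrier_vec (d k)" using Vc[OF k] by simp
  have "eigenvector (L k) (V k *\<^sub>v unit_vec (d k) m) (lam k m)"
    unfolding eigenvector_def dr using eigvec[OF k m] vc by blast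
  then show ?thesis unfolding spectrum_def eigenvalue_def by blast
qed

lemma lam_nz: assumes k: "k < n" and m: "m < d k" shows "lam k m \<noteq> 0"
proof
  assume z: "lam k m = 0"
  let ?v = "V k *\<^sub>v unit_vec (d k) m"
  have v: "?v \<in> carrier_vec (d k)" using Vc[OF k] by simp
  have "?v = (inv_m (L k) * L k) *\<^sub>v ?v" using Li_L[OF k] v by simp
  also have "\<dots> = inv_m (L k) *\<^sub>v (L k *\<^sub>v ?v)" using Lic[OF k] Lc[OF k] v by simp
  also have "L k *\<^sub>v ?v = 0 \<cdot>\<^sub>v ?v" using eigvec(1)[OF k m] unfolding z .
  also have "0 \<cdot>\<^sub>v ?v = 0\<^sub>v (d k)" by (rule sm_zero[OF v])
  also have "inv_m (L k) *\<^sub>v 0\<^sub>v (d k) = 0\<^sub>v (d k)" by (rule mv_zero[OF Lic[OF k]])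
  finally show False using eigvec(2)[OF k m] by blast
qed

lemma lam_ne: assumes "k < n" "l < n" "k \<noteq> l" "m < d k" "m' < d l" shows "lam k m \<noteq> lam l m'"
proof
  assume eq: "lam k m = lam l m'"
  have "lam k m \<in> spectrum (L k) \<inter> spectrum (L l)"
    using lam_eigenvalue[of k m] lam_eigenvalue[of l m'] assms eq by simp
  moreover have "spectrum (L k) \<inter> spectrum (L l) = {}" using disj assms by simp
  ultimately show False by simp
qed



abbreviation "DD \<equiv> Dm d L V lam C"

lemma Dm_same: "DD k k = 1\<^sub>m (d k)" by (cases k) (simp_all add: Dm.simps(2))

lemma Dm_dim: "i < n \<Longrightarrow> j \<le> i \<Longrightarrow> DD i j \<in> carrier_mat (d i) (d j)"
proof (induction i arbitrary: j)
  case 0 then show ?case by simp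
next
  case (Suc i)
  show ?case
  proof (cases "j = Suc i")
    case True then show ?thesis by (simp add: Dm.simps(2))
  next
    case False
    then have j: "j < n" "j \<le> i" using Suc.prems by auto
    show ?thesis unfolding Dm.simps(2) if_not_P[OF False]
      by (rule mult_carrier_mat[OF mult_carrier_mat[OF mult_carrier_mat[OF Lic[OF Suc.prems(1)] Vc[OF Suc.prems(1)]] mat_carrier] Vic[OF j(1)]])
  qed
qed

end


context kset begin

lemma sylvester:
  assumes I: "Suc i < n" and j: "j \<le> i"
  shows "L (Suc i) * DD (Suc i) j - DD (Suc i) j * L j = C (Suc i) * DD i j"
proof -
  define I where "I = Suc i"
  have In: "I < n" and jn: "j < n" and jI: "j \<noteq> I" using I j unfolding I_def by auto
  define M where "M = inv_m (V I) * C I * DD i j * V j"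
  define T where "T = Matrix.mat (d I) (d j) (\<lambda>(l, m). M $$ (l, m) * inverse (1 - lam j m / lam I l))"
  define LI where "LI = L I"  define LIi where "LIi = inv_m (L I)"
  define VI where "VI = V I"  define VIi where "VIi = inv_m (V I)"
  define Lj where "Lj = L j"  define Vj where "Vj = V j"  define Vji where "Vji = inv_m (V j)"
  define DI where "DI = mat_diag (d I) (lam I)"  define Dj where "Dj = mat_diag (d j) (lam j)"
  define CI where "CI = C I" define D' where "D' = DD i j"
  note defs = LI_def LIi_def VI_def VIi_def Lj_def Vj_def Vji_def DI_def Dj_def CI_def D'_def
  have M': "M = VIi * CI * D' * Vj" unfolding M_def defs ..
  have cLI: "LI \<in> carrier_mat (d I) (d I)" unfolding LI_def by (rule Lc[OF In])
  have cLIi: "LIi \<in> carrier_mat (d I) (d I)" unfolding LIi_def by (rule Lic[OF In])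
  have cVI: "VI \<in> carrier_mat (d I) (d I)" unfolding VI_def by (rule Vc[OF In])
  have cVIi: "VIi \<in> carrier_mat (d I) (d I)" unfolding VIi_def by (rule Vic[OF In])
  have cLj: "Lj \<in> carrier_mat (d j) (d j)" unfolding Lj_def by (rule Lc[OF jn])
  have cVj: "Vj \<in> carrier_mat (d j) (d j)" unfolding Vj_def by (rule Vc[OF jn])
  have cVji: "Vji \<in> carrier_mat (d j) (d j)" unfolding Vji_def by (rule Vic[OF jn])
  have cDI: "DI \<in> carrier_mat (d I) (d I)" unfolding DI_def by (rule mat_diag_dim)
  have cDj: "Dj \<in> carrier_mat (d j) (d j)" unfolding Dj_def by (rule mat_diag_dim)
  have cCI: "CI \<in> carrier_mat (d I) (d i)" unfolding CI_def I_def by (rule Cc[OF refl I])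
  have cD': "D' \<in> carrier_mat (d i) (d j)" unfolding D'_def by (rule Dm_dim[OF _ j]) (use I in simp)
  have cM: "M \<in> carrier_mat (d I) (d j)" unfolding M'
    by (rule mult_carrier_mat[OF mult_carrier_mat[OF mult_carrier_mat[OF cVIi cCI] cD'] cVj])
  have cT: "T \<in> carrier_mat (d I) (d j)" unfolding T_def by (rule mat_carrier)
  note c = cLI cLIi cVI cVIi cLj cVj cVji cDI cDj cCI cD' cT cM
  have DIdef: "DD I j = LIi * VI * T * Vji"
    unfolding I_def T_def M_def defs Dm.simps(2) using jI[unfolded I_def] by (simp only: if_False)
  have e1: "LI * VI = VI * DI" using eig In unfolding defs by auto
  have e2: "Lj * Vj = Vj * Dj" using eig jn unfolding defs by auto
  have i1: "LI * LIi = 1\<^sub>m (d I)" "LIi * LI = 1\<^sub>m (d I)" "VI * VIi = 1\<^sub>m (d I)" "VIi * VI = 1\<^sub>m (d I)"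
    "Vj * Vji = 1\<^sub>m (d j)" "Vji * Vj = 1\<^sub>m (d j)"
    using L_Li[OF In] Li_L[OF In] V_Vi[OF In] Vi_V[OF jn] V_Vi[OF jn] Vi_V[OF jn] Vi_V[OF In] unfolding defs by auto
  have cd: "dim_row LI = d I" "dim_col LI = d I" "dim_row LIi = d I" "dim_col LIi = d I"
    "dim_row VI = d I" "dim_col VI = d I" "dim_row VIi = d I" "dim_col VIi = d I"
    "dim_row Lj = d j" "dim_col Lj = d j" "dim_row Vj = d j" "dim_col Vj = d j"
    "dim_row Vji = d j" "dim_col Vji = d j" "dim_row DI = d I" "dim_col DI = d I"
    "dim_row Dj = d j" "dim_col Dj = d j" "dim_row CI = d I" "dim_col CI = d i"
    "dim_row D' = d i" "dim_col D' = d j" "dim_row T = d I" "dim_col T = d j"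
    "dim_row M = d I" "dim_col M = d j" using c by auto
  have s1: "Vji * Lj = Dj * Vji"
  proof -
    have "Vji * Lj = Vji * Lj * (Vj * Vji)" using cd i1 by (simp add: assoc_dim)
    also have "\<dots> = Vji * (Lj * Vj) * Vji" using cd by (simp add: assoc_dim)
    also have "\<dots> = (Vji * Vj) * Dj * Vji" using cd e2 by (simp add: assoc_dim)
    also have "\<dots> = Dj * Vji" using cd i1 by (simp add: assoc_dim)
    finally show ?thesis .
  qed
  have s2: "LIi * VI * DI = VI"
  proof -
    have "LIi * VI * DI = LIi * (LI * VI)" using cd e1 by (simp add: assoc_dim)
    also have "\<dots> = (LIi * LI) * VI" using cd by (simp add: assoc_dim)
    finally show ?thesis using i1 cd by simp
  qed
  have k1: "LI * (LIi * VI * T * Vji) = VI * T * Vji"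
  proof -
    have "LI * (LIi * VI * T * Vji) = (LI * LIi) * (VI * T * Vji)" using cd by (simp add: assoc_dim)
    then show ?thesis using i1 cd by simp
  qed
  have k2: "(LIi * VI * T * Vji) * Lj = LIi * VI * T * Dj * Vji"
  proof -
    have "(LIi * VI * T * Vji) * Lj = LIi * VI * T * (Vji * Lj)" using cd by (simp add: assoc_dim)
    also have "\<dots> = LIi * VI * T * (Dj * Vji)" using s1 by simp
    also have "\<dots> = LIi * VI * T * Dj * Vji" using cd by (simp add: assoc_dim)
    finally show ?thesis .
  qed
  have k3: "VI * T * Vji = LIi * VI * DI * T * Vji" using s2 by simp
  have k4: "LIi * VI * DI * T * Vji - LIi * VI * T * Dj * Vji = (LIi * VI) * ((DI * T - T * Dj) * Vji)"
  proof -
    have "(LIi * VI) * ((DI * T - T * Dj) * Vji) = (LIi * VI) * (DI * T * Vji - T * Dj * Vji)"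
      using c by (subst minus_mult_distrib_mat[of "DI*T" "d I" "d j" "T*Dj" Vji "d j"]) auto
    also have "\<dots> = (LIi * VI) * (DI * T * Vji) - (LIi * VI) * (T * Dj * Vji)"
      using c by (subst mult_minus_distrib_mat[of "LIi*VI" "d I" "d I" "DI*T*Vji" "d j" "T*Dj*Vji"]) auto
    also have "\<dots> = LIi * VI * DI * T * Vji - LIi * VI * T * Dj * Vji"
      using cd by (simp add: assoc_dim)
    finally show ?thesis by simp
  qed
  have lnz: "\<And>l. l < d I \<Longrightarrow> lam I l \<noteq> 0" using lam_nz[OF In] by auto
  have lne: "\<And>l m. l < d I \<Longrightarrow> m < d j \<Longrightarrow> lam I l \<noteq> lam j m" using lam_ne[OF In jn] jI by auto
  have k5: "DI * T - T * Dj = DI * M"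
  proof -
    have a: "DI * T = Matrix.mat (d I) (d j) (\<lambda>(l, m). lam I l * T $$ (l, m))"
      unfolding DI_def by (rule mat_diag_mult_left) (use c in auto)
    have b: "T * Dj = Matrix.mat (d I) (d j) (\<lambda>(l, m). T $$ (l, m) * lam j m)"
      unfolding Dj_def by (rule mat_diag_mult_right) (use c in auto)
    have e: "DI * M = Matrix.mat (d I) (d j) (\<lambda>(l, m). lam I l * M $$ (l, m))"
      unfolding DI_def by (rule mat_diag_mult_left) (use c in auto)
    show ?thesis unfolding a b e
    proof (intro eq_matI)
      fix l m assume lm: "l < dim_row (Matrix.mat (d I) (d j) (\<lambda>(l, m). lam I l * M $$ (l, m)))"
        "m < dim_col (Matrix.mat (d I) (d j) (\<lambda>(l, m). lam I l * M $$ (l, m)))"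
      then have l: "l < d I" and m: "m < d j" by auto
      have nz: "lam I l \<noteq> 0" "lam I l - lam j m \<noteq> 0" using lnz[OF l] lne[OF l m] by auto
      have "1 - lam j m / lam I l = (lam I l - lam j m) / lam I l" using nz by (simp add: field_simps)
      then have "T $$ (l, m) = M $$ (l, m) * lam I l / (lam I l - lam j m)"
        unfolding T_def using l m nz by simp
      then show "(Matrix.mat (d I) (d j) (\<lambda>(l, m). lam I l * T $$ (l, m)) -
          Matrix.mat (d I) (d j) (\<lambda>(l, m). T $$ (l, m) * lam j m)) $$ (l, m) =
          Matrix.mat (d I) (d j) (\<lambda>(l, m). lam I l * M $$ (l, m)) $$ (l, m)"
        using l m nz by (simp add: field_simps)
    qed auto
  qed
  have k6: "(LIi * VI) * ((DI * M) * Vji) = VI * M * Vji"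
  proof -
    have "(LIi * VI) * ((DI * M) * Vji) = (LIi * VI * DI) * M * Vji" using cd by (simp add: assoc_dim)
    then show ?thesis using s2 by simp
  qed
  have k7: "VI * M * Vji = CI * D'"
  proof -
    have "VI * M * Vji = (VI * VIi) * CI * D' * (Vj * Vji)" unfolding M' using cd by (simp add: assoc_dim)
    then show ?thesis using i1 cd by simp
  qed
  have "LI * DD I j - DD I j * Lj = CI * D'"
    unfolding DIdef k1 k2 k3 k4 k5 k6 k7 ..
  then show ?thesis unfolding defs I_def .
qed


abbreviation "PP \<equiv> pert d L V lam C"

end



declare pert.simps(2)[simp del]

context kset begin

lemma pert_carrier: assumes x: "\<forall>k<n. x k \<in> carrier_vec (d k)"
  shows "k < n \<Longrightarrow> PP k x \<in> carrier_vec (d k)"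
proof (induction k rule: less_induct)
  case (less k)
  show ?case
  proof (cases k)
    case 0 then show ?thesis using x less.prems by simp
  next
    case (Suc k')
    have kn: "Suc k' < n" using less.prems Suc by simp
    have "\<forall>j\<in>set [0..<Suc k']. (-1) ^ (k' - j) \<cdot>\<^sub>v (DD (Suc k') j *\<^sub>v PP j x) \<in> carrier_vec (d (Suc k'))"
    proof
      fix j assume "j \<in> set [0..<Suc k']"
      then have j: "j \<le> k'" by auto
      have "DD (Suc k') j \<in> carrier_mat (d (Suc k')) (d j)" using Dm_dim[OF kn] j by simp
      moreover have "PP j x \<in> carrier_vec (d j)" using less.IH[of j] j Suc kn by simp
      ultimately show "(-1) ^ (k' - j) \<cdot>\<^sub>v (DD (Suc k') j *\<^sub>v PP j x) \<in> carrier_vec (d (Suc k'))" by simp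
    qed
    then have F: "foldr (+) (map (\<lambda>j. (-1) ^ (k' - j) \<cdot>\<^sub>v (DD (Suc k') j *\<^sub>v PP j x)) [0..<Suc k']) (0\<^sub>v (d (Suc k'))) \<in> carrier_vec (d (Suc k'))"
      by (rule foldr_carrier)
    have X: "x (Suc k') \<in> carrier_vec (d (Suc k'))" using x kn by simp
    show ?thesis unfolding Suc pert.simps(2) by (rule add_carrier_vec[OF X F])
  qed
qed

lemma summand_carrier: assumes x: "\<forall>k<n. x k \<in> carrier_vec (d k)" and k: "k < n" and j: "j \<le> k"
  shows "DD k j *\<^sub>v PP j x \<in> carrier_vec (d k)"
proof -
  have "DD k j \<in> carrier_mat (d k) (d j)" by (rule Dm_dim[OF k j])
  moreover have "PP j x \<in> carrier_vec (d j)" using pert_carrier[OF x, of j] j k by simp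
  ultimately show ?thesis by (rule mult_mat_vec_carrier)
qed

end



context kset begin

lemma foldr_sum: assumes x: "\<forall>k<n. x k \<in> carrier_vec (d k)" and k: "k < n" and m: "m \<le> Suc k"
   and t: "t < d k"
  shows "foldr (+) (map (\<lambda>j. (-1) ^ (e j) \<cdot>\<^sub>v (DD k j *\<^sub>v PP j x)) [0..<m]) (0\<^sub>v (d k)) $ t
       = (\<Sum>j\<in>{0..<m}. (-1) ^ (e j) * (DD k j *\<^sub>v PP j x) $ t)"
proof -
  have "\<forall>j\<in>set [0..<m]. (-1) ^ (e j) \<cdot>\<^sub>v (DD k j *\<^sub>v PP j x) \<in> carrier_vec (d k)"
  proof
    fix j assume "j \<in> set [0..<m]"
    then have "j \<le> k" using m by simp
    then show "(-1) ^ (e j) \<cdot>\<^sub>v (DD k j *\<^sub>v PP j x) \<in> carrier_vec (d k)"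
      using summand_carrier[OF x k] by simp
  qed
  then have "foldr (+) (map (\<lambda>j. (-1) ^ (e j) \<cdot>\<^sub>v (DD k j *\<^sub>v PP j x)) [0..<m]) (0\<^sub>v (d k)) $ t
     = (\<Sum>j\<leftarrow>[0..<m]. ((-1) ^ (e j) \<cdot>\<^sub>v (DD k j *\<^sub>v PP j x)) $ t)"
    by (rule foldr_index[OF _ t])
  also have "\<dots> = (\<Sum>j\<in>{0..<m}. ((-1) ^ (e j) \<cdot>\<^sub>v (DD k j *\<^sub>v PP j x)) $ t)"
    by (simp only: interv_sum_list_conv_sum_set_nat set_upt)
  also have "\<dots> = (\<Sum>j\<in>{0..<m}. (-1) ^ (e j) * (DD k j *\<^sub>v PP j x) $ t)"
  proof (intro sum.cong refl)
    fix j assume "j \<in> {0..<m}"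
    then have "j \<le> k" using m by simp
    then have "DD k j *\<^sub>v PP j x \<in> carrier_vec (d k)" using summand_carrier[OF x k] by simp
    then have "dim_vec (DD k j *\<^sub>v PP j x) = d k" by (rule carrier_vecD)
    then show "((-1) ^ (e j) \<cdot>\<^sub>v (DD k j *\<^sub>v PP j x)) $ t = (-1) ^ (e j) * (DD k j *\<^sub>v PP j x) $ t"
      using t by (simp only: index_smult_vec)
  qed
  finally show ?thesis .
qed

lemma telescope: assumes x: "\<forall>k<n. x k \<in> carrier_vec (d k)" and k: "k < n"
  shows "foldr (+) (map (\<lambda>j. (-1) ^ (k - j) \<cdot>\<^sub>v (DD k j *\<^sub>v PP j x)) [0..<Suc k]) (0\<^sub>v (d k)) = x k"
proof (cases k)
  case 0 then show ?thesis using x k by simp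
next
  case (Suc k')
  have xk: "x k \<in> carrier_vec (d k)" using x k by simp
  have Pk: "PP k x \<in> carrier_vec (d k)" using pert_carrier[OF x k] .
  define G where "G = foldr (+) (map (\<lambda>j. (-1) ^ (k - j) \<cdot>\<^sub>v (DD k j *\<^sub>v PP j x)) [0..<Suc k]) (0\<^sub>v (d k))"
  define F where "F = foldr (+) (map (\<lambda>j. (-1) ^ (k' - j) \<cdot>\<^sub>v (DD (Suc k') j *\<^sub>v PP j x)) [0..<Suc k']) (0\<^sub>v (d (Suc k')))"
  have Gc: "G \<in> carrier_vec (d k)" unfolding G_def
    by (rule foldr_carrier) (use summand_carrier[OF x k] in simp)
  have k': "Suc k' < n" using k Suc by simp
  have Fc: "F \<in> carrier_vec (d (Suc k'))" unfolding F_def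
    by (rule foldr_carrier) (use summand_carrier[OF x k'] in simp)
  have PkF: "PP k x = x k + F" unfolding Suc F_def pert.simps(2) ..
  show ?thesis unfolding G_def[symmetric]
  proof (rule eq_vecI)
    show "dim_vec G = dim_vec (x k)" using Gc xk by simp
    fix t assume "t < dim_vec (x k)"
    then have t: "t < d k" using xk by simp
    define S where "S = (\<Sum>j\<in>{0..<Suc k'}. (-1) ^ (k' - j) * (DD (Suc k') j *\<^sub>v PP j x) $ t)"
    have "G $ t = (\<Sum>j\<in>{0..<Suc k}. (-1) ^ (k - j) * (DD k j *\<^sub>v PP j x) $ t)"
      unfolding G_def by (rule foldr_sum[OF x k _ t]) simp
    also have "\<dots> = (\<Sum>j\<in>{0..<k}. (-1) ^ (k - j) * (DD k j *\<^sub>v PP j x) $ t) + (DD k k *\<^sub>v PP k x) $ t"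
      by (simp only: sum.atLeast0_lessThan_Suc diff_self_eq_0 power_0 mult_1)
    also have "(DD k k *\<^sub>v PP k x) $ t = PP k x $ t" using Pk by (simp add: Dm_same)
    also have "(\<Sum>j\<in>{0..<k}. (-1) ^ (k - j) * (DD k j *\<^sub>v PP j x) $ t) = - S"
      unfolding S_def sum_negf[symmetric] Suc by (intro sum.cong refl) (simp add: Suc_diff_le)
    also have "PP k x $ t = x k $ t + S"
    proof -
      have "F $ t = S" unfolding F_def S_def
        by (rule foldr_sum[OF x k']) (use t Suc in simp_all)
      then show ?thesis unfolding PkF using xk Fc t Suc by simp
    qed
    finally show "G $ t = x k $ t" by simp
  qed
qed

lemma Lin_carrier: assumes x: "\<forall>k<n. x k \<in> carrier_vec (d k)"
  shows "\<forall>k<n. Lin L C x k \<in> carrier_vec (d k)"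
proof (intro allI impI)
  fix k assume k: "k < n"
  show "Lin L C x k \<in> carrier_vec (d k)"
  proof (cases k)
    case 0 then show ?thesis using x k Lc[OF k] by (simp add: Lin_def)
  next
    case (Suc k')
    have "C (Suc k') \<in> carrier_mat (d (Suc k')) (d k')" using Cc[OF Suc k] .
    then show ?thesis using x k Lc[OF k] Suc by (simp add: Lin_def)
  qed
qed

end


lemma mat_sub_swap:
  assumes A: "A \<in> carrier_mat r c" and B: "B \<in> carrier_mat r c" and Cm: "Cm \<in> carrier_mat r c"
    and e: "A - B = (Cm :: complex mat)"
  shows "B = A - Cm"
proof (rule eq_matI)
  fix i j assume ij: "i < dim_row (A - Cm)" "j < dim_col (A - Cm)"
  then have "(A - B) $$ (i, j) = Cm $$ (i, j)" using e by simp
  then have h: "Cm $$ (i, j) = A $$ (i, j) - B $$ (i, j)" using ij A B Cm by simp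
  show "B $$ (i, j) = (A - Cm) $$ (i, j)" using ij A B Cm by (simp add: h)
qed (use A B Cm in simp_all)

context kset begin
lemma pert_Lin: assumes x: "\<forall>k<n. x k \<in> carrier_vec (d k)"
  shows "k < n \<Longrightarrow> PP k (Lin L C x) = L k *\<^sub>v PP k x"
proof (induction k rule: less_induct)
  case (less k)
  note k = less.prems
  define y where "y = Lin L C x"
  have y: "\<forall>k<n. y k \<in> carrier_vec (d k)" using Lin_carrier[OF x] unfolding y_def .
  show ?case
  proof (cases k)
    case 0 then show ?thesis by (simp add: Lin_def)
  next
    case (Suc k')
    have k': "k' < n" using k Suc by simp
    have Lk: "L k \<in> carrier_mat (d k) (d k)" using Lc[OF k] .
    have Ck: "C k \<in> carrier_mat (d k) (d k')" using Cc[OF Suc k] Suc by simp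
    have Pk: "PP k x \<in> carrier_vec (d k)" using pert_carrier[OF x k] .
    have xk: "x k \<in> carrier_vec (d k)" "x k' \<in> carrier_vec (d k')" using x k k' by auto
    define F where "F = foldr (+) (map (\<lambda>j. (-1) ^ (k' - j) \<cdot>\<^sub>v (DD k j *\<^sub>v PP j x)) [0..<Suc k']) (0\<^sub>v (d k))"
    have Fc: "F \<in> carrier_vec (d k)" unfolding F_def
      using summand_carrier[OF x k] Suc by (intro foldr_carrier) auto
    have PkF: "PP k x = x k + F" unfolding F_def Suc pert.simps(2) ..
    have yk: "y k = L k *\<^sub>v x k + C k *\<^sub>v x k'" unfolding y_def Lin_def using Suc by simp
    have Pyk: "PP k y = y k + foldr (+) (map (\<lambda>j. (-1) ^ (k' - j) \<cdot>\<^sub>v (DD k j *\<^sub>v PP j y)) [0..<Suc k']) (0\<^sub>v (d k))"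
      unfolding Suc pert.simps(2) ..
    show ?thesis unfolding y_def[symmetric]
    proof (rule eq_vecI)
      show "dim_vec (PP k y) = dim_vec (L k *\<^sub>v PP k x)" using pert_carrier[OF y k] Lk by simp
      fix t assume "t < dim_vec (L k *\<^sub>v PP k x)"
      then have t: "t < d k" using Lk by simp
      define s where "s = (\<lambda>j::nat. (-1::complex) ^ (k' - j))"
      define a where "a = (\<lambda>j. (L k *\<^sub>v (DD k j *\<^sub>v PP j x)) $ t)"
      define b where "b = (\<lambda>j. (C k *\<^sub>v (DD k' j *\<^sub>v PP j x)) $ t)"
      have "PP k y $ t = y k $ t + (\<Sum>j\<in>{0..<Suc k'}. s j * (DD k j *\<^sub>v PP j y) $ t)"
      proof -
        have Gc: "foldr (+) (map (\<lambda>j. (-1) ^ (k' - j) \<cdot>\<^sub>v (DD k j *\<^sub>v PP j y)) [0..<Suc k']) (0\<^sub>v (d k)) \<in> carrier_vec (d k)"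
          by (rule foldr_carrier) (use summand_carrier[OF y k] Suc in simp)
        have "foldr (+) (map (\<lambda>j. (-1) ^ (k' - j) \<cdot>\<^sub>v (DD k j *\<^sub>v PP j y)) [0..<Suc k']) (0\<^sub>v (d k)) $ t
           = (\<Sum>j\<in>{0..<Suc k'}. s j * (DD k j *\<^sub>v PP j y) $ t)"
          unfolding s_def by (rule foldr_sum[OF y k]) (use Suc t in simp_all)
        then show ?thesis unfolding Pyk using Gc y k t by simp
      qed
      also have "(\<Sum>j\<in>{0..<Suc k'}. s j * (DD k j *\<^sub>v PP j y) $ t) = (\<Sum>j\<in>{0..<Suc k'}. s j * (a j - b j))"
      proof (intro sum.cong refl)
        fix j assume "j \<in> {0..<Suc k'}"
        then have j: "j \<le> k'" "j < k" using Suc by auto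
        have jn: "j < n" using j k by simp
        have Dk: "DD k j \<in> carrier_mat (d k) (d j)" using Dm_dim[OF k] j by simp
        have Dk': "DD k' j \<in> carrier_mat (d k') (d j)" using Dm_dim[OF k'] j by simp
        have Pj: "PP j x \<in> carrier_vec (d j)" using pert_carrier[OF x jn] .
        have "DD k j *\<^sub>v PP j y = DD k j *\<^sub>v (L j *\<^sub>v PP j x)" using less.IH[OF j(2) jn] unfolding y_def by simp
        also have "\<dots> = (DD k j * L j) *\<^sub>v PP j x" using Dk Lc[OF jn] Pj by simp
        also have "DD k j * L j = L k * DD k j - C k * DD k' j"
        proof (rule mat_sub_swap)
          show "L k * DD k j - DD k j * L j = C k * DD k' j" using sylvester[of k' j] k j Suc by simp
          show "L k * DD k j \<in> carrier_mat (d k) (d j)" using Lk Dk by simp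
          show "DD k j * L j \<in> carrier_mat (d k) (d j)" using Lc[OF jn] Dk by simp
          show "C k * DD k' j \<in> carrier_mat (d k) (d j)" using Ck Dk' by simp
        qed
        also have "(L k * DD k j - C k * DD k' j) *\<^sub>v PP j x = L k *\<^sub>v (DD k j *\<^sub>v PP j x) - C k *\<^sub>v (DD k' j *\<^sub>v PP j x)"
          using Lk Dk Ck Dk' Pj by (subst minus_mult_distrib_mat_vec[of _ "d k" "d j"]) auto
        finally show "s j * (DD k j *\<^sub>v PP j y) $ t = s j * (a j - b j)"
          unfolding a_def b_def using t Lk Ck Dk Dk' Pj by simp
      qed
      also have "y k $ t = (L k *\<^sub>v x k) $ t + (C k *\<^sub>v x k') $ t" unfolding yk using Lk Ck xk t by simp
      also have "(C k *\<^sub>v x k') $ t = (\<Sum>j\<in>{0..<Suc k'}. s j * b j)"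
      proof -
        have "x k' = foldr (+) (map (\<lambda>j. s j \<cdot>\<^sub>v (DD k' j *\<^sub>v PP j x)) [0..<Suc k']) (0\<^sub>v (d k'))"
          using telescope[OF x k'] unfolding s_def by simp
        then have "(C k *\<^sub>v x k') $ t = (C k *\<^sub>v foldr (+) (map (\<lambda>j. s j \<cdot>\<^sub>v (DD k' j *\<^sub>v PP j x)) [0..<Suc k']) (0\<^sub>v (d k'))) $ t"
          by simp
        also have "\<dots> = (\<Sum>j\<in>{0..<Suc k'}. s j * (C k *\<^sub>v (DD k' j *\<^sub>v PP j x)) $ t)"
          by (rule foldr_mult_index[OF Ck _ t]) (use summand_carrier[OF x k'] in simp)
        finally show ?thesis unfolding b_def .
      qed
      also have "(L k *\<^sub>v PP k x) $ t = (L k *\<^sub>v x k) $ t + (\<Sum>j\<in>{0..<Suc k'}. s j * a j)"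
      proof -
        have "L k *\<^sub>v PP k x = L k *\<^sub>v x k + L k *\<^sub>v F" unfolding PkF using Lk xk Fc
          by (simp add: mult_add_distrib_mat_vec)
        moreover have "(L k *\<^sub>v F) $ t = (\<Sum>j\<in>{0..<Suc k'}. s j * a j)"
          unfolding F_def a_def s_def using summand_carrier[OF x k] Suc t
          by (subst foldr_mult_index[OF Lk]) auto
        ultimately show ?thesis using Lk xk Fc t by simp
      qed
      moreover have "(\<Sum>j\<in>{0..<Suc k'}. s j * (a j - b j)) = (\<Sum>j\<in>{0..<Suc k'}. s j * a j) - (\<Sum>j\<in>{0..<Suc k'}. s j * b j)"
        by (simp add: right_diff_distrib sum_subtractf)
      ultimately show "PP k y $ t = (L k *\<^sub>v PP k x) $ t" by simp
    qed
  qed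
qed

end

lemma (in kset) Vi_L: "k < n \<Longrightarrow> inv_m (V k) * L k = mat_diag (d k) (lam k) * inv_m (V k)"
proof -
  assume k: "k < n"
  have c: "dim_row (inv_m (V k)) = d k" "dim_col (inv_m (V k)) = d k" "dim_row (L k) = d k" "dim_col (L k) = d k"
    "dim_row (V k) = d k" "dim_col (V k) = d k"
    "dim_row (mat_diag (d k) (lam k)) = d k" "dim_col (mat_diag (d k) (lam k)) = d k"
    using Vic[OF k] Lc[OF k] Vc[OF k] by (auto simp: mat_diag_def)
  have "inv_m (V k) * L k = inv_m (V k) * L k * (V k * inv_m (V k))" using V_Vi[OF k] c by simp
  also have "\<dots> = inv_m (V k) * (L k * V k) * inv_m (V k)" using c by (simp add: assoc_dim)
  also have "\<dots> = (inv_m (V k) * V k) * mat_diag (d k) (lam k) * inv_m (V k)" using c eig k by (simp add: assoc_dim)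
  also have "\<dots> = mat_diag (d k) (lam k) * inv_m (V k)" using c Vi_V[OF k] by simp
  finally show ?thesis .
qed

lemma diag_index: assumes w: "w \<in> carrier_vec r" and s: "s < r"
  shows "(mat_diag r f *\<^sub>v w) $ s = f s * w $ (s :: nat) "
proof -
  have "(mat_diag r f *\<^sub>v w) $ s = (\<Sum>i\<in>{0..<r}. (if s = i then f i else 0) * w $ i)"
    using w s by (simp add: mat_diag_def scalar_prod_def)
  also have "\<dots> = f s * w $ s"
    using s by (simp add: sum.remove[of _ s] if_distrib cong: if_cong)
  finally show ?thesis .
qed

theorem corollary2:
  fixes n :: nat and d :: "nat \<Rightarrow> nat"
    and L V C :: "nat \<Rightarrow> complex mat" and lam :: "nat \<Rightarrow> nat \<Rightarrow> complex"
    and N :: "nat \<Rightarrow> complex vec \<Rightarrow> real"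
    and i s :: nat and x :: "nat \<Rightarrow> complex vec"
  assumes n_pos: "n \<ge> 1"
    and d_pos: "\<forall>k<n. d k \<ge> 1"
    and norms: "\<forall>k<n. is_vec_norm (d k) (N k)"
    and L_dim: "\<forall>k<n. L k \<in> carrier_mat (d k) (d k)"
    and C_dim: "\<forall>k<n. k \<ge> 1 \<longrightarrow> C k \<in> carrier_mat (d k) (d (k - 1))"
    and V_dim: "\<forall>k<n. V k \<in> carrier_mat (d k) (d k)"
    and L_inv: "\<forall>k<n. invertible_mat (L k)"
    and V_inv: "\<forall>k<n. invertible_mat (V k)"
    and eig: "\<forall>k<n. L k * V k = V k * mat_diag (d k) (lam k)"
    and disj: "\<forall>k<n. \<forall>l<n. k \<noteq> l \<longrightarrow> spectrum (L k) \<inter> spectrum (L l) = {}"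
    and norm_mono: "\<forall>k. k + 1 < n \<longrightarrow> op_norm (d k) (N k) (L k) < op_norm (d (k + 1)) (N (k + 1)) (L (k + 1))"
    and norm_le1: "op_norm (d (n - 1)) (N (n - 1)) (L (n - 1)) \<le> 1"
    and i_lt: "i < n"
    and s_lt: "s < d i"
    and x_dim: "\<forall>k<n. x k \<in> carrier_vec (d k)"
  shows "Psi V i s (\<lambda>k. pert d L V lam C k (Lin L C x))
         = lam i s * Psi V i s (\<lambda>k. pert d L V lam C k x)"
proof -
  interpret kset n d L V C lam
    by (rule kset.intro[OF L_dim C_dim V_dim L_inv V_inv eig disj])
  have P: "PP i x \<in> carrier_vec (d i)" using pert_carrier[OF x_dim i_lt] .
  have "Psi V i s (\<lambda>k. PP k (Lin L C x)) = (inv_m (V i) *\<^sub>v (L i *\<^sub>v PP i x)) $ s"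
    unfolding Psi_def using pert_Lin[OF x_dim i_lt] by simp
  also have "inv_m (V i) *\<^sub>v (L i *\<^sub>v PP i x) = (inv_m (V i) * L i) *\<^sub>v PP i x"
    using Vic[OF i_lt] Lc[OF i_lt] P by simp
  also have "\<dots> = (mat_diag (d i) (lam i) * inv_m (V i)) *\<^sub>v PP i x" using Vi_L[OF i_lt] by simp
  also have "\<dots> = mat_diag (d i) (lam i) *\<^sub>v (inv_m (V i) *\<^sub>v PP i x)"
    by (rule assoc_mult_mat_vec[OF mat_diag_dim Vic[OF i_lt] P])
  also have "\<dots> $ s = lam i s * (inv_m (V i) *\<^sub>v PP i x) $ s"
    by (rule diag_index[OF _ s_lt]) (use Vic[OF i_lt] P in simp)
  also have "\<dots> = lam i s * Psi V i s (\<lambda>k. PP k x)" unfolding Psi_def ..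
  finally show ?thesis .
qed

end
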